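(* Let $P,Q,R_0,R_1$ be integers with $PQ\ne0$, $\Delta:=P^2-4Q\neq0$, $|R_0|+|R_1|>0$, $\gcd(P,Q)=\gcd(R_1,Q)=1$, such that $\alpha/\beta$ is not a root of unity, where $\alpha,\beta$ are the roots of $x^2-Px+Q$; let $U_n=(\alpha^n-\beta^n)/(\alpha-\beta)$. Let $n\ge k$ be positive integers. Then for every $j\in\{k,k+1,\dots,n\}$, \[\prod_{\substack{k\le i\le n\\ i\ne j}}\left(R_0Q\left(\frac{U_{j-1}}{U_j}-\frac{U_{i-1}}{U_i}\right)\right)=(-1)^{n-j}R_0^{\,n-k}Q^{f(j,k,n)}\frac{[j-k]_{\boldsymbol U}!\,[n-j]_{\boldsymbol U}!}{U_j^{\,n-k-1}\,(U_kU_{k+1}\cdots U_n)}.\] Furthermore, if $k\ge2$, then for every $j\in\{k,\dots,n\}$, \[\prod_{\substack{k\le i\le n\\ i\ne j}}\left(R_1\left(\frac{U_i}{U_{i-1}}-\frac{U_j}{U_{j-1}}\right)\right)=(-1)^{n-j}R_1^{\,n-k}Q^{f(j,k,n)-(n-k)}\frac{[j-k]_{\boldsymbol U}!\,[n-j]_{\boldsymbol U}!}{U_{j-1}^{\,n-k-1}\,(U_{k-1}U_k\cdots U_{n-1})}.\]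
   Context: $U_0=0,U_1=1,U_{n+2}=PU_{n+1}-QU_n$; $[j]_{\boldsymbol U}!:=U_1\cdots U_j$ with $[0]_{\boldsymbol U}!=1$. For $k\le j\le n$, $f(j,k,n):=\sum_{k\le i\le n,\ i\ne j}\min(i,j)$. *)

theory Defs
  imports Complex_Main
begin

fun lucasU :: "int \<Rightarrow> int \<Rightarrow> nat \<Rightarrow> int" where
  "lucasU P Q 0 = 0"
| "lucasU P Q (Suc 0) = 1"
| "lucasU P Q (Suc (Suc n)) = P * lucasU P Q (Suc n) - Q * lucasU P Q n"

definition ufact :: "int \<Rightarrow> int \<Rightarrow> nat \<Rightarrow> int" where
  "ufact P Q j = (\<Prod>i\<in>{1..j}. lucasU P Q i)"

definition fjkn :: "nat \<Rightarrow> nat \<Rightarrow> nat \<Rightarrow> nat" where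
  "fjkn j k n = (\<Sum>i\<in>{k..n} - {j}. min i j)"

end

theory Submission
  imports Defs
begin

lemma binet2:
  fixes \<alpha> \<beta> :: complex
  assumes "\<alpha> + \<beta> = of_int P" and "\<alpha> * \<beta> = of_int Q"
  shows "(\<alpha> - \<beta>) * of_int (lucasU P Q n) = \<alpha>^n - \<beta>^n \<and>
         (\<alpha> - \<beta>) * of_int (lucasU P Q (Suc n)) = \<alpha>^Suc n - \<beta>^Suc n"
proof (induction n)
  case 0 then show ?case by simp
next
  case (Suc n)
  have "(\<alpha> - \<beta>) * of_int (lucasU P Q (Suc (Suc n)))
     = (\<alpha> + \<beta>) * ((\<alpha> - \<beta>) * of_int (lucasU P Q (Suc n))) - (\<alpha> * \<beta>) * ((\<alpha> - \<beta>) * of_int (lucasU P Q n))"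
    using assms by (simp add: algebra_simps)
  also have "\<dots> = \<alpha>^Suc (Suc n) - \<beta>^Suc (Suc n)"
  proof -
    from Suc.IH have h1: "(\<alpha> - \<beta>) * of_int (lucasU P Q n) = \<alpha>^n - \<beta>^n"
      and h2: "(\<alpha> - \<beta>) * of_int (lucasU P Q (Suc n)) = \<alpha>^Suc n - \<beta>^Suc n" by auto
    show ?thesis unfolding h1 h2 by (simp add: algebra_simps)
  qed
  finally show ?case using Suc.IH by simp
qed

lemma lucas_nz:
  fixes \<alpha> \<beta> :: complex
  assumes "\<alpha> + \<beta> = of_int P" and "\<alpha> * \<beta> = of_int Q" and "Q \<noteq> 0"
    and "\<not> (\<exists>m::nat. m > 0 \<and> (\<alpha> / \<beta>) ^ m = 1)" and "n > 0"
  shows "lucasU P Q n \<noteq> 0"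
proof
  assume h: "lucasU P Q n = 0"
  have "\<alpha>^n - \<beta>^n = 0" using binet2[OF assms(1,2), of n] h by simp
  moreover have "\<beta> \<noteq> 0" using assms(2,3) by auto
  ultimately have "(\<alpha> / \<beta>) ^ n = 1" by (simp add: power_divide)
  then show False using assms(4,5) by blast
qed

lemma docagne:
  "lucasU P Q a * lucasU P Q (Suc a + d) - lucasU P Q (a + d) * lucasU P Q (Suc a)
   = - (Q ^ a * lucasU P Q d)"
proof (induction a)
  case 0 then show ?case by simp
next
  case (Suc a)
  have e1: "lucasU P Q (Suc (Suc a) + d) = P * lucasU P Q (Suc a + d) - Q * lucasU P Q (a + d)"
    by (metis add_Suc lucasU.simps(3))
  have e2: "lucasU P Q (Suc (Suc a)) = P * lucasU P Q (Suc a) - Q * lucasU P Q a" by simp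
  have "lucasU P Q (Suc a) * lucasU P Q (Suc (Suc a) + d) - lucasU P Q (Suc a + d) * lucasU P Q (Suc (Suc a))
     = Q * (lucasU P Q a * lucasU P Q (Suc a + d) - lucasU P Q (a + d) * lucasU P Q (Suc a))"
    unfolding e1 e2 by (simp add: algebra_simps)
  also have "\<dots> = Q * (- (Q ^ a * lucasU P Q d))" using Suc.IH by simp
  finally show ?case by simp
qed

lemma numer:
  assumes "i \<ge> 1" "j \<ge> 1"
  shows "lucasU P Q (j-1) * lucasU P Q i - lucasU P Q (i-1) * lucasU P Q j
    = (if j < i then -1 else 1) * Q ^ (min i j - 1) * lucasU P Q (i - j + (j - i))"
proof (cases "j < i")
  case True
  obtain a where a: "j = Suc a" using assms by (cases j) auto
  define d where "d = i - j"
  have i: "i = Suc a + d" using True a d_def by simp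
  show ?thesis using docagne[of P Q a d] True unfolding i a by (simp add: algebra_simps)
next
  case False
  obtain a where a: "i = Suc a" using assms by (cases i) auto
  define d where "d = j - i"
  have j: "j = Suc a + d" using False a d_def by simp
  show ?thesis using docagne[of P Q a d] False unfolding j a by (simp add: algebra_simps)
qed

lemma prod_gen:
  fixes c q y :: "'a::field"
  shows "(\<Prod>i\<in>A. c * s i * q ^ e i * w i / (x i * y))
    = c ^ card A * prod s A * q ^ (sum e A) * prod w A / (y ^ card A * prod x A)"
  by (simp add: prod_dividef prod.distrib power_sum mult.commute)

lemma prod_sign:
  assumes "j \<in> {k..n}"
  shows "(\<Prod>i\<in>{k..n} - {j}. (if j < i then -1 else 1 :: 'a::comm_ring_1)) = (-1) ^ (n - j)"
proof -
  have "(\<Prod>i\<in>{k..n} - {j}. (if j < i then -1 else 1 :: 'a))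
     = (\<Prod>i\<in>({k..n} - {j}) \<inter> {i. j < i}. -1) * (\<Prod>i\<in>({k..n} - {j}) \<inter> - {i. j < i}. 1)"
    by (rule prod.If_cases) simp
  also have "({k..n} - {j}) \<inter> {i. j < i} = {Suc j..n}" using assms by auto
  finally show ?thesis by simp
qed

lemma prod_dist:
  assumes "j \<in> {k..n}"
  shows "(\<Prod>i\<in>{k..n} - {j}. lucasU P Q (i - j + (j - i))) = ufact P Q (j - k) * ufact P Q (n - j)"
proof -
  have A: "{k..n} - {j} = {k..<j} \<union> {Suc j..n}" using assms by auto
  have "(\<Prod>i\<in>{k..<j}. lucasU P Q (i - j + (j - i))) = (\<Prod>m\<in>{1..j-k}. lucasU P Q m)"
    by (rule prod.reindex_bij_witness[where i="\<lambda>m. j - m" and j="\<lambda>i. j - i"]) (use assms in auto)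
  moreover have "(\<Prod>i\<in>{Suc j..n}. lucasU P Q (i - j + (j - i))) = (\<Prod>m\<in>{1..n-j}. lucasU P Q m)"
    by (rule prod.reindex_bij_witness[where i="\<lambda>m. m + j" and j="\<lambda>i. i - j"]) (use assms in auto)
  ultimately show ?thesis unfolding A ufact_def
    by (subst prod.union_disjoint) auto
qed

lemma card_A: "j \<in> {k..n} \<Longrightarrow> card ({k..n} - {j}) = n - k"
  by (simp add: card_Diff_singleton)

theorem lemma4:
  fixes P Q R0 R1 :: int and \<alpha> \<beta> :: complex and k n :: nat
  assumes "P * Q \<noteq> 0"
    and "P^2 - 4*Q \<noteq> 0"
    and "\<bar>R0\<bar> + \<bar>R1\<bar> > 0"
    and "gcd P Q = 1" and "gcd R1 Q = 1"
    and "\<alpha> + \<beta> = of_int P" and "\<alpha> * \<beta> = of_int Q"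
    and "\<not> (\<exists>m::nat. m > 0 \<and> (\<alpha> / \<beta>) ^ m = 1)"
    and "1 \<le> k" and "k \<le> n"
  shows "(\<forall>j\<in>{k..n}.
           (\<Prod>i\<in>{k..n} - {j}.
              of_int R0 * of_int Q * (of_int (lucasU P Q (j-1)) / of_int (lucasU P Q j)
                                     - of_int (lucasU P Q (i-1)) / of_int (lucasU P Q i)))
           = (-1)^(n-j) * of_int R0 ^ (n-k) * of_int Q ^ fjkn j k n
             * of_int (ufact P Q (j-k)) * of_int (ufact P Q (n-j))
             / ((of_int (lucasU P Q j) :: rat) powi (int (n-k) - 1)
                * of_int (\<Prod>i\<in>{k..n}. lucasU P Q i)))
       \<and> (k \<ge> 2 \<longrightarrow> (\<forall>j\<in>{k..n}.
           (\<Prod>i\<in>{k..n} - {j}.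
              of_int R1 * (of_int (lucasU P Q i) / of_int (lucasU P Q (i-1))
                           - of_int (lucasU P Q j) / of_int (lucasU P Q (j-1))))
           = (-1)^(n-j) * of_int R1 ^ (n-k) * of_int Q ^ (fjkn j k n - (n-k))
             * of_int (ufact P Q (j-k)) * of_int (ufact P Q (n-j))
             / ((of_int (lucasU P Q (j-1)) :: rat) powi (int (n-k) - 1)
                * of_int (\<Prod>i\<in>{k-1..n-1}. lucasU P Q i))))"
proof -
  define u where "u i = (of_int (lucasU P Q i) :: rat)" for i
  have Qnz: "Q \<noteq> 0" using assms(1) by auto
  have nz: "lucasU P Q i \<noteq> 0" if "i \<ge> 1" for i
    using lucas_nz[OF assms(6,7) Qnz assms(8)] that by auto
  define s where "s i j = (if j < i then -1 else 1 :: rat)" for i j :: nat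
  define w where "w i j = (of_int (lucasU P Q (i - j + (j - i))) :: rat)" for i j :: nat
  have numq: "u (j-1) * u i - u (i-1) * u j = s i j * of_int Q ^ (min i j - 1) * w i j"
    if "i \<ge> 1" "j \<ge> 1" for i j
  proof -
    have "of_int (lucasU P Q (j-1) * lucasU P Q i - lucasU P Q (i-1) * lucasU P Q j)
      = (of_int ((if j < i then -1 else 1) * Q ^ (min i j - 1) * lucasU P Q (i - j + (j - i))) :: rat)"
      using numer[OF that] by simp
    then show ?thesis unfolding u_def s_def w_def by simp
  qed
  have part1: "(\<Prod>i\<in>{k..n} - {j}.
              of_int R0 * of_int Q * (of_int (lucasU P Q (j-1)) / of_int (lucasU P Q j)
                                     - of_int (lucasU P Q (i-1)) / of_int (lucasU P Q i)))
           = (-1)^(n-j) * of_int R0 ^ (n-k) * of_int Q ^ fjkn j k n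
             * of_int (ufact P Q (j-k)) * of_int (ufact P Q (n-j))
             / ((of_int (lucasU P Q j) :: rat) powi (int (n-k) - 1)
                * of_int (\<Prod>i\<in>{k..n}. lucasU P Q i))" if j: "j \<in> {k..n}" for j
  proof -
    have j1: "j \<ge> 1" using j assms(9) by auto
    have "(\<Prod>i\<in>{k..n} - {j}.
              of_int R0 * of_int Q * (of_int (lucasU P Q (j-1)) / of_int (lucasU P Q j)
                                     - of_int (lucasU P Q (i-1)) / of_int (lucasU P Q i)))
        = (\<Prod>i\<in>{k..n} - {j}. of_int R0 * s i j * of_int Q ^ min i j * w i j / (u i * u j))"
    proof (rule prod.cong[OF refl])
      fix i assume i: "i \<in> {k..n} - {j}"
      have i1: "i \<ge> 1" using i assms(9) by auto
      have ui: "u i \<noteq> 0" "u j \<noteq> 0" using nz i1 j1 unfolding u_def by auto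
      have qm: "(of_int Q :: rat) ^ min i j = of_int Q * of_int Q ^ (min i j - 1)"
      proof -
        have "min i j = Suc (min i j - 1)" using i1 j1 by simp
        then show ?thesis by (metis power_Suc)
      qed
      have "of_int R0 * of_int Q * (u (j-1) / u j - u (i-1) / u i)
          = of_int R0 * of_int Q * (u (j-1) * u i - u (i-1) * u j) / (u i * u j)"
        using ui by (simp add: field_simps)
      also have "\<dots> = of_int R0 * s i j * of_int Q ^ min i j * w i j / (u i * u j)"
        unfolding numq[OF i1 j1] qm by (simp add: algebra_simps)
      finally show "of_int R0 * of_int Q * (of_int (lucasU P Q (j-1)) / of_int (lucasU P Q j)
                                     - of_int (lucasU P Q (i-1)) / of_int (lucasU P Q i))
          = of_int R0 * s i j * of_int Q ^ min i j * w i j / (u i * u j)"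
        unfolding u_def .
    qed
    also have "\<dots> = of_int R0 ^ (n-k) * (-1)^(n-j) * of_int Q ^ fjkn j k n
        * (of_int (ufact P Q (j-k)) * of_int (ufact P Q (n-j))) / (u j ^ (n-k) * (\<Prod>i\<in>{k..n} - {j}. u i))"
    proof -
      have "(\<Prod>i\<in>{k..n} - {j}. s i j) = (-1)^(n-j)" unfolding s_def by (rule prod_sign[OF j])
      moreover have "(\<Prod>i\<in>{k..n} - {j}. w i j) = of_int (ufact P Q (j-k)) * of_int (ufact P Q (n-j))"
        unfolding w_def using prod_dist[OF j, of P Q] by (metis of_int_mult of_int_prod)
      ultimately show ?thesis unfolding prod_gen card_A[OF j] fjkn_def by simp
    qed
    also have "u j ^ (n-k) * (\<Prod>i\<in>{k..n} - {j}. u i) = u j powi (int (n-k) - 1) * of_int (\<Prod>i\<in>{k..n}. lucasU P Q i)"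
    proof -
      have ujnz: "u j \<noteq> 0" using nz j1 unfolding u_def by auto
      have "of_int (\<Prod>i\<in>{k..n}. lucasU P Q i) = (\<Prod>i\<in>{k..n}. u i)" unfolding u_def by simp
      also have "\<dots> = u j * (\<Prod>i\<in>{k..n} - {j}. u i)" using j by (simp add: prod.remove)
      finally have e: "of_int (\<Prod>i\<in>{k..n}. lucasU P Q i) = u j * (\<Prod>i\<in>{k..n} - {j}. u i)" .
      have "u j powi (int (n-k) - 1) * u j = u j powi (int (n-k) - 1 + 1)"
        using ujnz by (subst power_int_add_1) auto
      then have "u j powi (int (n-k) - 1) * u j = u j ^ (n-k)" by simp
      then show ?thesis unfolding e by (simp add: mult.assoc)
    qed
    finally show ?thesis unfolding u_def by (simp add: algebra_simps)
  qed
  have part2: "(\<Prod>i\<in>{k..n} - {j}.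
              of_int R1 * (of_int (lucasU P Q i) / of_int (lucasU P Q (i-1))
                           - of_int (lucasU P Q j) / of_int (lucasU P Q (j-1))))
           = (-1)^(n-j) * of_int R1 ^ (n-k) * of_int Q ^ (fjkn j k n - (n-k))
             * of_int (ufact P Q (j-k)) * of_int (ufact P Q (n-j))
             / ((of_int (lucasU P Q (j-1)) :: rat) powi (int (n-k) - 1)
                * of_int (\<Prod>i\<in>{k-1..n-1}. lucasU P Q i))" if j: "j \<in> {k..n}" and k2: "k \<ge> 2" for j
  proof -
    have j1: "j \<ge> 2" using j k2 by auto
    have "(\<Prod>i\<in>{k..n} - {j}.
              of_int R1 * (of_int (lucasU P Q i) / of_int (lucasU P Q (i-1))
                           - of_int (lucasU P Q j) / of_int (lucasU P Q (j-1))))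
        = (\<Prod>i\<in>{k..n} - {j}. of_int R1 * s i j * of_int Q ^ (min i j - 1) * w i j / (u (i-1) * u (j-1)))"
    proof (rule prod.cong[OF refl])
      fix i assume i: "i \<in> {k..n} - {j}"
      have i1: "i \<ge> 2" using i k2 by auto
      have ui: "u (i-1) \<noteq> 0" "u (j-1) \<noteq> 0" using nz i1 j1 unfolding u_def by auto
      have "of_int R1 * (u i / u (i-1) - u j / u (j-1))
          = of_int R1 * (u (j-1) * u i - u (i-1) * u j) / (u (i-1) * u (j-1))"
        using ui by (simp add: field_simps)
      also have "\<dots> = of_int R1 * s i j * of_int Q ^ (min i j - 1) * w i j / (u (i-1) * u (j-1))"
      proof -
        have nq: "u (j-1) * u i - u (i-1) * u j = s i j * of_int Q ^ (min i j - 1) * w i j"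
          using numq i1 j1 by simp
        show ?thesis unfolding nq by (simp add: algebra_simps)
      qed
      finally show "of_int R1 * (of_int (lucasU P Q i) / of_int (lucasU P Q (i-1))
                           - of_int (lucasU P Q j) / of_int (lucasU P Q (j-1)))
          = of_int R1 * s i j * of_int Q ^ (min i j - 1) * w i j / (u (i-1) * u (j-1))"
        unfolding u_def .
    qed
    also have "\<dots> = of_int R1 ^ (n-k) * (-1)^(n-j) * of_int Q ^ (fjkn j k n - (n-k))
        * (of_int (ufact P Q (j-k)) * of_int (ufact P Q (n-j))) / (u (j-1) ^ (n-k) * (\<Prod>i\<in>{k..n} - {j}. u (i-1)))"
    proof -
      have "(\<Prod>i\<in>{k..n} - {j}. s i j) = (-1)^(n-j)" unfolding s_def by (rule prod_sign[OF j])
      moreover have "(\<Prod>i\<in>{k..n} - {j}. w i j) = of_int (ufact P Q (j-k)) * of_int (ufact P Q (n-j))"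
        unfolding w_def using prod_dist[OF j, of P Q] by (metis of_int_mult of_int_prod)
      moreover have "(\<Sum>i\<in>{k..n} - {j}. min i j - 1) = fjkn j k n - (n-k)"
      proof -
        have "(\<Sum>i\<in>{k..n} - {j}. min i j - 1) = (\<Sum>i\<in>{k..n} - {j}. min i j) - (\<Sum>i\<in>{k..n} - {j}. 1)"
          by (rule sum_subtractf_nat) (use j k2 in auto)
        then show ?thesis unfolding fjkn_def using card_A[OF j] by simp
      qed
      ultimately show ?thesis unfolding prod_gen card_A[OF j] by simp
    qed
    also have "u (j-1) ^ (n-k) * (\<Prod>i\<in>{k..n} - {j}. u (i-1)) = u (j-1) powi (int (n-k) - 1) * of_int (\<Prod>i\<in>{k-1..n-1}. lucasU P Q i)"
    proof -
      have ujnz: "u (j-1) \<noteq> 0" using nz j1 unfolding u_def by auto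
      have "of_int (\<Prod>i\<in>{k-1..n-1}. lucasU P Q i) = (\<Prod>i\<in>{k-1..n-1}. u i)" unfolding u_def by simp
      also have "\<dots> = (\<Prod>i\<in>{k..n}. u (i-1))"
        by (rule prod.reindex_bij_witness[where i="\<lambda>i. i - 1" and j="\<lambda>m. m + 1"]) (use k2 in auto)
      also have "\<dots> = u (j-1) * (\<Prod>i\<in>{k..n} - {j}. u (i-1))" using j by (simp add: prod.remove)
      finally have e: "of_int (\<Prod>i\<in>{k-1..n-1}. lucasU P Q i) = u (j-1) * (\<Prod>i\<in>{k..n} - {j}. u (i-1))" .
      have "u (j-1) powi (int (n-k) - 1) * u (j-1) = u (j-1) powi (int (n-k) - 1 + 1)"
        using ujnz by (subst power_int_add_1) auto
      then have "u (j-1) powi (int (n-k) - 1) * u (j-1) = u (j-1) ^ (n-k)" by simp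
      then show ?thesis unfolding e by (simp add: mult.assoc)
    qed
    finally show ?thesis unfolding u_def by (simp add: algebra_simps)
  qed
  show ?thesis using part1 part2 by blast
qed

end
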